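(* Let $n\geq 3$ and let $A=(a_{ij})\in\mathcal{M}_{n}(\mathbb{Z})$ with $\det(A)\neq 0$. Let $\Lambda=\{Az: z\in\mathbb{Z}^n\}$ be the lattice generated by the columns of $A$, and let $\mathcal{F}_A$ be its set of $A$-feasible lattice vectors. Let $b=\max\{|a_{ij}| : 1\leq i,j\leq n\}$. If $\lambda=Az\in\mathcal{F}_A$ with $z=(z_1,\ldots,z_n)\in\mathbb{Z}^n$, then $\log(|z_i|)\leq n(\log(n)+\log(b))$ for all $1\leq i\leq n$.
   Context: Logarithms are in base $2$. $\|\cdot\|$ is the Euclidean norm, $d(x,y)=\|x-y\|$, and $d(x,\Lambda)=\min_{\lambda\in\Lambda}d(x,\lambda)$. The fundamental parallelepiped of $\Lambda$ with respect to $A$ is $\mathcal{P}_A=\{Ay : y\in[0,1)^n\}$. A lattice vector $\lambda\in\Lambda$ is $A$-feasible if there exists $x\in\mathcal{P}_A$ with $d(\lambda,x)=d(x,\Lambda)$; $\mathcal{F}_A$ is the set of $A$-feasible lattice vectors. *)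

theory Defs
  imports "HOL-Analysis.Analysis"
begin

definition real_mat :: "int^'n^'m \<Rightarrow> real^'n^'m" where
  "real_mat A = (\<chi> i j. real_of_int (A $ i $ j))"

definition real_vec :: "int^'n \<Rightarrow> real^'n" where
  "real_vec z = (\<chi> i. real_of_int (z $ i))"

definition lattice :: "int^'n^'n \<Rightarrow> (real^'n) set" where
  "lattice A = {real_mat A *v real_vec z | z. True}"

definition fund_par :: "int^'n^'n \<Rightarrow> (real^'n) set" where
  "fund_par A = {real_mat A *v y | y. \<forall>i. 0 \<le> y $ i \<and> y $ i < 1}"

definition feasible :: "int^'n^'n \<Rightarrow> (real^'n) set" where
  "feasible A = {l \<in> lattice A. \<exists>x \<in> fund_par A. \<forall>m \<in> lattice A. dist l x \<le> dist m x}"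

end

theory Submission
  imports Defs "HOL-Combinatorics.Permutations"
begin

lemma card_perm_fix:
  fixes i k :: "'n::finite"
  shows "card {p. p permutes (UNIV::'n set) \<and> p i = k} = fact (CARD('n) - 1)"
proof -
  have "bij_betw (\<lambda>\<tau>. Transposition.transpose i k \<circ> \<tau>) {\<tau>. \<tau> permutes (UNIV - {i})} {p. p permutes UNIV \<and> p i = k}"
  proof (rule bij_betw_byWitness[where f' = "\<lambda>\<tau>. Transposition.transpose i k \<circ> \<tau>"])
    show "\<forall>a\<in>{\<tau>. \<tau> permutes UNIV - {i}}. Transposition.transpose i k \<circ> (Transposition.transpose i k \<circ> a) = a"
      by (auto simp: fun_eq_iff)
    show "\<forall>a\<in>{p. p permutes UNIV \<and> p i = k}. Transposition.transpose i k \<circ> (Transposition.transpose i k \<circ> a) = a"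
      by (auto simp: fun_eq_iff)
    show "(\<circ>) (Transposition.transpose i k) ` {\<tau>. \<tau> permutes UNIV - {i}} \<subseteq> {p. p permutes UNIV \<and> p i = k}"
    proof clarify
      fix \<tau> assume t: "\<tau> permutes UNIV - {i}"
      have "\<tau> i = i" using permutes_not_in[OF t] by auto
      moreover have "\<tau> permutes UNIV" using permutes_subset[OF t] by auto
      ultimately show "Transposition.transpose i k \<circ> \<tau> permutes UNIV \<and> (Transposition.transpose i k \<circ> \<tau>) i = k"
        by (auto intro: permutes_compose permutes_swap_id)
    qed
    show "(\<circ>) (Transposition.transpose i k) ` {p. p permutes UNIV \<and> p i = k} \<subseteq> {\<tau>. \<tau> permutes UNIV - {i}}"
    proof -
      have "\<And>p. p permutes (UNIV::'n set) \<Longrightarrow> Transposition.transpose i (p i) \<circ> p permutes UNIV - {i}"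
        using permutes_insert_lemma[of _ i "UNIV - {i}"] by (simp add: insert_absorb)
      then show ?thesis by auto
    qed
  qed
  then have "card {p. p permutes UNIV \<and> p i = k} = card {\<tau>. \<tau> permutes (UNIV - {i})}"
    by (simp add: bij_betw_same_card)
  also have "\<dots> = fact (CARD('n) - 1)"
    by (rule card_permutations) auto
  finally show ?thesis .
qed

lemma sum_perm_apply:
  fixes g :: "'n::finite \<Rightarrow> real" and i :: 'n
  shows "(\<Sum>p\<in>{p. p permutes (UNIV::'n set)}. g (p i)) = fact (CARD('n) - 1) * (\<Sum>k\<in>UNIV. g k)"
proof -
  have "(\<Sum>p\<in>{p. p permutes (UNIV::'n set)}. g (p i))
      = (\<Sum>k\<in>UNIV. \<Sum>p\<in>{x. x \<in> {p. p permutes (UNIV::'n set)} \<and> x i = k}. g (p i))"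
    by (rule sum.group[symmetric]) (auto simp: finite_permutations)
  also have "\<dots> = (\<Sum>k\<in>UNIV. g k * fact (CARD('n) - 1))"
  proof (rule sum.cong[OF refl])
    fix k
    have "(\<Sum>p\<in>{x. x \<in> {p. p permutes (UNIV::'n set)} \<and> x i = k}. g (p i))
        = (\<Sum>p\<in>{p. p permutes (UNIV::'n set) \<and> p i = k}. g k)"
      by (rule sum.cong) auto
    also have "\<dots> = g k * fact (CARD('n) - 1)"
      using card_perm_fix[of i k] by simp
    finally show "(\<Sum>p\<in>{x. x \<in> {p. p permutes (UNIV::'n set)} \<and> x i = k}. g (p i)) = g k * fact (CARD('n) - 1)" .
  qed
  finally show ?thesis by (simp add: sum_distrib_right mult.commute)
qed

lemma fact_bound: "n \<ge> 3 \<Longrightarrow> 3 * fact n \<le> 2 * (n::nat) ^ (n - 1)"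
proof (induction n rule: nat_induct_at_least)
  case base
  then show ?case by (simp add: fact_numeral)
next
  case (Suc n)
  have "3 * fact (Suc n) = Suc n * (3 * fact n)" by simp
  also have "\<dots> \<le> Suc n * (2 * n ^ (n - 1))" using Suc.IH by (rule mult_le_mono2)
  also have "\<dots> \<le> Suc n * (2 * Suc n ^ (n - 1))" by (intro mult_le_mono2 power_mono) auto
  also have "\<dots> = 2 * Suc n ^ (Suc n - 1)" using Suc.hyps
    by (cases n) (auto simp: algebra_simps)
  finally show ?case .
qed


lemma norm_sq_vec: "(norm (u::real^'n))^2 = (\<Sum>k\<in>UNIV. (u$k)^2)"
  by (simp add: norm_vec_def L2_set_def sum_nonneg)

lemma det_col_bound:
  fixes B :: "real^'n^'n" and c :: "real^'n" and bb :: real and i :: 'n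
  assumes Bb: "\<And>k j. \<bar>B$k$j\<bar> \<le> bb"
  shows "\<bar>det (\<chi> k j. if j = i then c$k else B$k$j)\<bar>
           \<le> fact (CARD('n) - 1) * bb^(CARD('n)-1) * (\<Sum>k\<in>UNIV. \<bar>c$k\<bar>)"
proof -
  define C where "C = (\<chi> k j. if j = i then c$k else B$k$j)"
  have bb0: "0 \<le> bb" using Bb[of i i] by linarith
  have "det C = det (transpose C)" by simp
  also have "\<dots> = (\<Sum>p\<in>{p. p permutes (UNIV::'n set)}. of_int (sign p) * (\<Prod>k\<in>UNIV. C$(p k)$k))"
    by (simp add: det_def transpose_def)
  finally have "\<bar>det C\<bar> \<le> (\<Sum>p\<in>{p. p permutes (UNIV::'n set)}. \<bar>of_int (sign p) * (\<Prod>k\<in>UNIV. C$(p k)$k)\<bar>)"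
    by (simp add: sum_abs)
  also have "\<dots> \<le> (\<Sum>p\<in>{p. p permutes (UNIV::'n set)}. bb^(CARD('n)-1) * \<bar>c$(p i)\<bar>)"
  proof (rule sum_mono)
    fix p assume "p \<in> {p. p permutes (UNIV::'n set)}"
    have "\<bar>of_int (sign p) * (\<Prod>k\<in>UNIV. C$(p k)$k)\<bar> = (\<Prod>k\<in>UNIV. \<bar>C$(p k)$k\<bar>)"
      by (simp add: sign_def abs_prod)
    also have "\<dots> = \<bar>C$(p i)$i\<bar> * (\<Prod>k\<in>UNIV-{i}. \<bar>C$(p k)$k\<bar>)"
      by (simp add: prod.remove)
    also have "\<dots> \<le> \<bar>c$(p i)\<bar> * (\<Prod>k\<in>UNIV-{i}. bb)"
      by (intro mult_mono prod_mono) (auto simp: C_def Bb prod_nonneg)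
    also have "\<dots> = bb^(CARD('n)-1) * \<bar>c$(p i)\<bar>"
      by (simp add: card_Diff_singleton)
    finally show "\<bar>of_int (sign p) * (\<Prod>k\<in>UNIV. C$(p k)$k)\<bar> \<le> bb^(CARD('n)-1) * \<bar>c$(p i)\<bar>" .
  qed
  also have "\<dots> = bb^(CARD('n)-1) * (fact (CARD('n) - 1) * (\<Sum>k\<in>UNIV. \<bar>c$k\<bar>))"
    by (simp add: sum_distrib_left[symmetric] sum_perm_apply[of "\<lambda>k. \<bar>c$k\<bar>"])
  finally show ?thesis unfolding C_def by (simp add: algebra_simps)
qed

theorem proposition2p4:
  fixes A :: "int^'n^'n" and z :: "int^'n" and b :: int
  assumes "CARD('n) \<ge> 3"
    and "det A \<noteq> 0"
    and "b = Max {\<bar>A $ i $ j\<bar> | i j. True}"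
    and "real_mat A *v real_vec z \<in> feasible A"
  shows "\<forall>i. log 2 \<bar>real_of_int (z $ i)\<bar>
           \<le> real CARD('n) * (log 2 (real CARD('n)) + log 2 (real_of_int b))"
proof -
  define N where "N = CARD('n)"
  define M where "M = real_mat A"
  define bb where "bb = real_of_int b"
  have N3: "N \<ge> 3" using assms(1) N_def by simp
  have "{\<bar>A $ i $ j\<bar> | i j. True} = (\<lambda>(i,j). \<bar>A $ i $ j\<bar>) ` UNIV" by auto
  then have fin: "finite {\<bar>A $ i $ j\<bar> | i j. True}" by simp
  have Ab: "\<And>i j. \<bar>A$i$j\<bar> \<le> b" unfolding assms(3) by (rule Max_ge[OF fin]) blast
  have Mb: "\<And>i j. \<bar>M$i$j\<bar> \<le> bb" using Ab unfolding M_def real_mat_def bb_def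
    by (simp del: of_int_abs add: of_int_abs[symmetric])
  have detM: "det M = real_of_int (det A)"
    unfolding M_def real_mat_def det_def by simp
  have detM1: "\<bar>det M\<bar> \<ge> 1" using assms(2) detM by linarith
  have "b \<noteq> 0"
  proof
    assume "b = 0"
    then have "A = mat 0" using Ab by (simp add: vec_eq_iff mat_def)
    moreover have "det (0::int^'n^'n) = 0" unfolding det_def by (simp add: power_0_left)
    ultimately show False using assms(2) by simp
  qed
  moreover have "b \<ge> 0" using Ab[of undefined undefined] by linarith
  ultimately have bb1: "bb \<ge> 1" unfolding bb_def by linarith
  from assms(4) obtain y where y: "\<forall>i. 0 \<le> y$i \<and> y$i < 1"
    and near: "\<forall>m\<in>lattice A. dist (M *v real_vec z) (M *v y) \<le> dist m (M *v y)"
    unfolding feasible_def fund_par_def M_def by auto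
  define x where "x = M *v y"
  define lam where "lam = M *v real_vec z"
  define rr :: "int^'n" where "rr = (\<chi> j. round (y$j))"
  have "M *v real_vec rr \<in> lattice A" unfolding lattice_def M_def by auto
  then have dle: "norm (lam - x) \<le> norm (M *v real_vec rr - x)"
    using near by (simp add: dist_norm lam_def x_def)
  define w where "w = lam - x"
  define v where "v = M *v real_vec rr - x"
  have vk_bd: "\<bar>v$k\<bar> \<le> N*bb/2" for k
  proof -
    have "v$k = (\<Sum>j\<in>UNIV. M$k$j * (real_vec rr $ j - y$j))"
      by (simp add: v_def x_def matrix_vector_mult_def sum_subtractf right_diff_distrib)
    then have "\<bar>v$k\<bar> \<le> (\<Sum>j\<in>UNIV. \<bar>M$k$j * (real_vec rr $ j - y$j)\<bar>)"
      by (simp add: sum_abs)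
    also have "\<dots> \<le> (\<Sum>j\<in>(UNIV::'n set). bb * (1/2))"
    proof (rule sum_mono)
      fix j
      have "\<bar>real_vec rr $ j - y$j\<bar> \<le> 1/2"
        using of_int_round_abs_le[of "y$j"] by (simp add: real_vec_def rr_def)
      then show "\<bar>M$k$j * (real_vec rr $ j - y$j)\<bar> \<le> bb * (1/2)"
        unfolding abs_mult by (intro mult_mono Mb) (use bb1 in auto)
    qed
    finally show ?thesis by (simp add: N_def)
  qed
  have "(\<Sum>k\<in>UNIV. (w$k)^2) \<le> (\<Sum>k\<in>UNIV. (v$k)^2)"
    using dle unfolding w_def v_def norm_sq_vec[symmetric]
    by (simp add: power_mono)
  also have "\<dots> \<le> (\<Sum>k\<in>(UNIV::'n set). (N*bb/2)^2)"
  proof (rule sum_mono)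
    fix k show "(v$k)^2 \<le> (N*bb/2)^2"
      using vk_bd[of k] bb1 by (simp add: abs_le_square_iff[symmetric])
  qed
  finally have wsq: "(\<Sum>k\<in>UNIV. (w$k)^2) \<le> N * (N*bb/2)^2" by (simp add: N_def)
  have "(\<Sum>k\<in>UNIV. \<bar>w$k\<bar>)^2 \<le> (\<Sum>k\<in>UNIV. (\<bar>w$k\<bar>)^2) * N"
    using sum_squared_le_sum_of_squares[of "\<lambda>k. \<bar>w$k\<bar>" UNIV] by (simp add: N_def)
  also have "\<dots> \<le> (N * (N*bb/2)^2) * N"
    using wsq by (intro mult_right_mono) auto
  also have "\<dots> = (N^2*bb/2)^2" by (simp add: power2_eq_square)
  finally have l1w: "(\<Sum>k\<in>UNIV. \<bar>w$k\<bar>) \<le> N^2*bb/2"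
    by (rule power2_le_imp_le) (use bb1 in auto)
  have xk: "\<bar>x$k\<bar> \<le> N*bb" for k
  proof -
    have "\<bar>x$k\<bar> \<le> (\<Sum>j\<in>UNIV. \<bar>M$k$j * y$j\<bar>)"
      by (simp add: x_def matrix_vector_mult_def sum_abs)
    also have "\<dots> \<le> (\<Sum>j\<in>(UNIV::'n set). bb * 1)"
    proof (rule sum_mono)
      fix j
      show "\<bar>M$k$j * y$j\<bar> \<le> bb * 1"
        unfolding abs_mult by (intro mult_mono Mb) (use bb1 y in \<open>auto simp: less_imp_le\<close>)
    qed
    finally show ?thesis by (simp add: N_def)
  qed
  have "(\<Sum>k\<in>UNIV. \<bar>lam$k\<bar>) \<le> (\<Sum>k\<in>UNIV. \<bar>x$k\<bar> + \<bar>w$k\<bar>)"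
    by (rule sum_mono) (simp add: w_def)
  also have "\<dots> = (\<Sum>k\<in>UNIV. \<bar>x$k\<bar>) + (\<Sum>k\<in>UNIV. \<bar>w$k\<bar>)" by (simp add: sum.distrib)
  also have "\<dots> \<le> (\<Sum>k\<in>(UNIV::'n set). N*bb) + N^2*bb/2"
    by (intro add_mono sum_mono xk l1w)
  also have "\<dots> = 3/2 * N^2 * bb" by (simp add: N_def power2_eq_square)
  finally have l1lam: "(\<Sum>k\<in>UNIV. \<bar>lam$k\<bar>) \<le> 3/2 * N^2 * bb" .
  have detM0: "det M \<noteq> 0" using detM1 by auto
  have zc: "real_vec z = (\<chi> k. det(\<chi> i j. if j=k then lam$i else M$i$j) / det M)"
    using cramer[OF detM0, of "real_vec z" lam] lam_def by simp
  have fb: "3 * fact N \<le> 2 * N^(N-1)" using fact_bound[OF N3] .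
  then have fbr: "3 * (fact N :: real) \<le> 2 * real N^(N-1)"
    by (metis (mono_tags, opaque_lifting) of_nat_fact of_nat_le_iff of_nat_mult of_nat_numeral of_nat_power)
  have zb: "\<bar>real_of_int (z$i)\<bar> \<le> real N ^ N * bb ^ N" for i
  proof -
    have "real_of_int (z$i) = det(\<chi> k j. if j=i then lam$k else M$k$j) / det M"
      using arg_cong[OF zc, of "\<lambda>u. u$i"] by (simp add: real_vec_def)
    then have "\<bar>real_of_int (z$i)\<bar> \<le> \<bar>det(\<chi> k j. if j=i then lam$k else M$k$j)\<bar>"
      using detM1 by (simp add: abs_divide divide_le_eq mult_le_cancel_left1)
    also have "\<dots> \<le> fact (N - 1) * bb^(N-1) * (\<Sum>k\<in>UNIV. \<bar>lam$k\<bar>)"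
      using det_col_bound[where B=M and bb=bb and c=lam and i=i, OF Mb] by (simp add: N_def)
    also have "\<dots> \<le> fact (N - 1) * bb^(N-1) * (3/2 * N^2 * bb)"
      using l1lam bb1 by (intro mult_left_mono) auto
    also have "\<dots> = (3 * (N * fact (N - 1))) / 2 * N * (bb^(N-1) * bb)"
      by (simp add: algebra_simps power2_eq_square)
    also have "\<dots> = (3 * fact N) / 2 * N * bb^N"
      using N3 by (simp add: fact_reduce[of N] power_eq_if[of bb N])
    also have "\<dots> \<le> (2 * real N^(N-1)) / 2 * N * bb^N"
      using fbr bb1 by (intro mult_right_mono divide_right_mono) auto
    also have "\<dots> = real N ^ N * bb ^ N"
      using N3 by (simp add: power_eq_if[of "real N" N])
    finally show ?thesis .
  qed
  show ?thesis
  proof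
    fix i
    have rhs0: "0 \<le> real N * (log 2 (real N) + log 2 bb)"
      using N3 bb1 by (intro mult_nonneg_nonneg add_nonneg_nonneg) auto
    have "log 2 \<bar>real_of_int (z $ i)\<bar> \<le> real N * (log 2 (real N) + log 2 bb)"
    proof (cases "z$i = 0")
      case True then show ?thesis using rhs0 by (simp add: log_def)
    next
      case False
      then have "\<bar>real_of_int (z$i)\<bar> > 0" by simp
      then have "log 2 \<bar>real_of_int (z $ i)\<bar> \<le> log 2 (real N ^ N * bb ^ N)"
        using zb[of i] by simp
      also have "\<dots> = real N * (log 2 (real N) + log 2 bb)"
        using N3 bb1 by (simp add: log_mult log_nat_power algebra_simps)
      finally show ?thesis .
    qed
    then show "log 2 \<bar>real_of_int (z $ i)\<bar>
           \<le> real CARD('n) * (log 2 (real CARD('n)) + log 2 (real_of_int b))"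
      by (simp add: N_def bb_def)
  qed
qed

end
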